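(* Assume the setting described in the context (quadratic nonlinearity), and additionally $u(t)\le1$ for all $t\ge0$. Let $f_0\in F$ and $T\in(0,+\infty]$, put $\mathscr F(t):=\|f_0\|+\Xi_-(t)\,\mathcal U(t)$, and assume $4K\,\mathcal U(T)\,\mathscr F(T)\le1$. Then VP$(f_0)$ has a solution $\varphi:[0,T)\to F$ and, for all $t\in[0,T)$, $\|\varphi(t)\|\le\mathscr F(t)\,\mathcal X(4K\mathcal U(t)\mathscr F(t))$, where $\mathcal X(z):=(1-\sqrt{1-z})/(z/2)$ for $z\in(0,1]$ and $\mathcal X(0):=1$.
   Context: Banach spaces over a common field. $X\hookrightarrow Y$ means $X$ is a dense subspace of $Y$ with continuous inclusion. Setting: $F_+,F,F_-$ Banach spaces with norms $\|\cdot\|_+,\|\cdot\|,\|\cdot\|_-$, $F_+\hookrightarrow F\hookrightarrow F_-$; $\mathcal A:F_+\to F_-$ linear with $\|\cdot\|_+$ equivalent on $F_+$ to $\|f\|_-+\|\mathcal Af\|_-$; $\mathcal A$ generates a strongly continuous semigroup $(e^{t\mathcal A})_{t\ge0}$ on $F_-$ (domain $F_+$); $e^{t\mathcal A}(F)\subset F$ ($t\ge0$) with $(f,t)\mapsto e^{t\mathcal A}f$ continuous $F\times[0,\infty)\to F$ and $\|e^{t\mathcal A}f\|\le u(t)\|f\|$ for some $u\in C([0,\infty),(0,\infty))$; $e^{t\mathcal A}(F_-)\subset F$ ($t>0$) with $(f,t)\mapsto e^{t\mathcal A}f$ continuous $F_-\times(0,\infty)\to F$ and $\|e^{t\mathcal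 A}f\|\le u_-(t)\|f\|_-$ for some $u_-\in C((0,\infty),(0,\infty))$ with $u_-(t)=O(t^{-(1-\sigma)})$ as $t\to0^+$, $\sigma\in(0,1]$. $\mathscr P:F\times F\to F_-$ bilinear with $\|\mathscr P(f,g)\|_-\le K\|f\|\|g\|$, $K\in(0,\infty)$; $\xi:[0,+\infty)\to F_-$ locally Lipschitz; $\mathcal P(f,t):=\mathscr P(f,f)+\xi(t)$. $\mathcal U\in C([0,+\infty),[0,+\infty))$ nondecreasing with $\int_0^tu_-(s)\,ds\le\mathcal U(t)$ and $\mathcal U(0)=0$; $\Xi_-\in C([0,+\infty),[0,+\infty))$ nondecreasing with $\|\xi(t)\|_-\le\Xi_-(t)$; values at $+\infty$ are limits. VP$(f_0)$ asks for $\varphi\in C([0,T),F)$ with $\varphi(t)=e^{t\mathcal A}f_0+\int_0^te^{(t-s)\mathcal A}\mathcal P(\varphi(s),s)\,ds$ for $t\in[0,T)$. *)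

theory Defs
  imports "HOL-Analysis.Analysis" "HOL-Library.Landau_Symbols"
begin

definition sc_semigroup :: "(real \<Rightarrow> 'm::banach \<Rightarrow> 'm) \<Rightarrow> bool" where
  "sc_semigroup S \<longleftrightarrow>
     (\<forall>t\<ge>0. bounded_linear (S t)) \<and>
     S 0 = id \<and>
     (\<forall>t\<ge>0. \<forall>s\<ge>0. S (t + s) = S t \<circ> S s) \<and>
     (\<forall>x. continuous_on {0..} (\<lambda>t. S t x))"

definition gen_at :: "(real \<Rightarrow> 'm::real_normed_vector \<Rightarrow> 'm) \<Rightarrow> 'm \<Rightarrow> 'm \<Rightarrow> bool" where
  "gen_at S x y \<longleftrightarrow> ((\<lambda>h. (S h x - x) /\<^sub>R h) \<longlongrightarrow> y) (at_right 0)"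

definition locally_lipschitz_nonneg :: "(real \<Rightarrow> 'm::real_normed_vector) \<Rightarrow> bool" where
  "locally_lipschitz_nonneg \<xi> \<longleftrightarrow>
     (\<forall>R\<ge>0. \<exists>L. \<forall>s\<in>{0..R}. \<forall>t\<in>{0..R}. norm (\<xi> s - \<xi> t) \<le> L * \<bar>s - t\<bar>)"

text \<open>Value of a nondecreasing function at T \<in> (0,+\<infinity>]; at +\<infinity> it is the limit (= supremum).\<close>
definition ext_val :: "(real \<Rightarrow> real) \<Rightarrow> ereal \<Rightarrow> ereal" where
  "ext_val g T = (if T = \<infinity> then (SUP t\<in>{0..}. ereal (g t)) else ereal (g (real_of_ereal T)))"

definition chiX :: "real \<Rightarrow> real" where
  "chiX z = (if z = 0 then 1 else (1 - sqrt (1 - z)) / (z / 2))"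

end

theory Submission
  imports Defs
begin

lemma improper_left:
  fixes f :: "real \<Rightarrow> 'a::banach"
  assumes ab: "a \<le> b" and cf: "continuous_on {a<..b} f"
    and bd: "\<And>x. x \<in> {a<..b} \<Longrightarrow> norm (f x) \<le> g x" and gi: "g integrable_on {a..b}"
  shows "f integrable_on {a..b}"
proof (cases "a = b")
  case True then show ?thesis by (metis integrable_on_refl interval_cbox)
next
  case False
  with ab have ab: "a < b" by simp
  define G where "G c = integral {c..b} f" for c
  define Ig where "Ig c = integral {c..b} g" for c
  have fi: "f integrable_on {c..d}" if "a < c" "d \<le> b" for c d
    by (rule integrable_continuous_interval, rule continuous_on_subset[OF cf]) (use that in auto)
  have gii: "g integrable_on {c..d}" if "a \<le> c" "d \<le> b" for c d
    by (rule integrable_subinterval_real[OF gi]) (use that in auto)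
  have key: "norm (G c - G d) \<le> Ig c - Ig d" if "a < c" "c \<le> d" "d \<le> b" for c d
  proof -
    have "G c = integral {c..d} f + G d" unfolding G_def
      by (rule Henstock_Kurzweil_Integration.integral_combine[symmetric]) (use that fi in auto)
    moreover have "Ig c = integral {c..d} g + Ig d" unfolding Ig_def
      by (rule Henstock_Kurzweil_Integration.integral_combine[symmetric]) (use that gii in auto)
    moreover have "norm (integral {c..d} f) \<le> integral {c..d} g"
      by (rule integral_norm_bound_integral) (use that fi gii bd in auto)
    ultimately show ?thesis by simp
  qed
  have "continuous_on {a..b} Ig" unfolding Ig_def
    by (rule indefinite_integral_continuous_1'[OF gi])
  then have ucI: "uniformly_continuous_on {a..b} Ig"
    by (simp add: compact_uniformly_continuous)
  have ucG: "uniformly_continuous_on {a<..b} G"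
    unfolding uniformly_continuous_on_def
  proof (intro allI impI)
    fix e :: real assume "e > 0"
    then obtain d where d: "d > 0" "\<forall>x\<in>{a..b}. \<forall>x'\<in>{a..b}. dist x' x < d \<longrightarrow> dist (Ig x') (Ig x) < e"
      using ucI unfolding uniformly_continuous_on_def by metis
    show "\<exists>d>0. \<forall>x\<in>{a<..b}. \<forall>x'\<in>{a<..b}. dist x' x < d \<longrightarrow> dist (G x') (G x) < e"
    proof (intro exI[of _ d] conjI ballI impI)
      fix x x' assume x: "x \<in> {a<..b}" "x' \<in> {a<..b}" "dist x' x < d"
      have I: "dist (Ig x') (Ig x) < e" using d x by auto
      show "dist (G x') (G x) < e"
      proof (cases "x \<le> x'")
        case True
        then have "norm (G x - G x') \<le> Ig x - Ig x'" using x by (intro key) auto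
        then show ?thesis using I by (simp add: dist_norm dist_commute norm_minus_commute)
      next
        case False
        then have "norm (G x' - G x) \<le> Ig x' - Ig x" using x by (intro key) auto
        then show ?thesis using I by (simp add: dist_norm)
      qed
    qed (use d in auto)
  qed
  obtain H where H: "uniformly_continuous_on (closure {a<..b}) H" "\<And>x. x \<in> {a<..b} \<Longrightarrow> G x = H x"
    using uniformly_continuous_on_extension_on_closure[OF ucG] by metis
  have cH: "continuous_on {a..b} H"
    using H(1) ab by (simp add: uniformly_continuous_imp_continuous)
  have dH: "(H has_vector_derivative - f x) (at x)" if x: "x \<in> {a<..<b}" for x
  proof -
    define c where "c = (a + x) / 2"
    have c: "a < c" "c < x" using x by (auto simp: c_def)
    have "((\<lambda>u. integral {u..b} f) has_vector_derivative - f x) (at x within {c..b})"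
      by (rule integral_has_vector_derivative') (rule continuous_on_subset[OF cf], use c x in auto)
    then have "((\<lambda>u. integral {u..b} f) has_vector_derivative - f x) (at x within {c<..<b})"
      by (rule has_vector_derivative_within_subset) auto
    then have "((\<lambda>u. integral {u..b} f) has_vector_derivative - f x) (at x)"
      using at_within_open[of x "{c<..<b}"] c x by auto
    then show ?thesis
      by (rule has_vector_derivative_transform_within_open[of _ _ _ "{a<..<b}"])
         (use x H(2) in \<open>auto simp: G_def\<close>)
  qed
  have "((\<lambda>x. - f x) has_integral H b - H a) {a..b}"
    by (rule fundamental_theorem_of_calculus_interior_strong[of "{}"]) (use ab dH cH in auto)
  moreover have "H b = 0" using H(2)[of b] ab by (simp add: G_def)
  ultimately have "(f has_integral H a) {a..b}"
    by (simp add: has_integral_neg_iff)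
  then show ?thesis by blast
qed

lemma reflect_t:
  fixes f :: "real \<Rightarrow> 'a::banach"
  assumes "(f has_integral I) {0..t}"
  shows "((\<lambda>s. f (t - s)) has_integral I) {0..t}"
proof -
  have "((\<lambda>x. f (- x)) has_integral I) {-t..-0}" using has_integral_reflect_real[of f I 0 t] assms by blast
  from has_integral_shift_real_ivl[OF this, of "-t"] show ?thesis by simp
qed

locale setting =
  fixes i2 :: "'f::banach \<Rightarrow> 'm::banach" and S :: "real \<Rightarrow> 'm \<Rightarrow> 'm" and SF :: "real \<Rightarrow> 'f \<Rightarrow> 'f"
    and SmF :: "real \<Rightarrow> 'm \<Rightarrow> 'f" and um U Xi :: "real \<Rightarrow> real" and \<sigma> K :: real
    and P :: "'f \<Rightarrow> 'f \<Rightarrow> 'm" and \<xi> :: "real \<Rightarrow> 'm"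
  assumes i2: "bounded_linear i2" "inj i2"
    and S_lin: "\<And>t. t \<ge> 0 \<Longrightarrow> linear (S t)"
    and SF: "\<And>t f. t \<ge> 0 \<Longrightarrow> i2 (SF t f) = S t (i2 f)"
    and SF_cont: "continuous_on (UNIV \<times> {0..}) (\<lambda>(f, t). SF t f)"
    and SF_bound: "\<And>t f. t \<ge> 0 \<Longrightarrow> norm (SF t f) \<le> norm f"
    and SmF: "\<And>t f. t > 0 \<Longrightarrow> i2 (SmF t f) = S t f"
    and SmF_cont: "continuous_on (UNIV \<times> {0<..}) (\<lambda>(f, t). SmF t f)"
    and um: "continuous_on {0<..} um" "\<And>t. t > 0 \<Longrightarrow> um t > 0"
    and SmF_bound: "\<And>t f. t > 0 \<Longrightarrow> norm (SmF t f) \<le> um t * norm f"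
    and sigma: "0 < \<sigma>"
    and um_O: "um \<in> O[at_right 0](\<lambda>t. t powr (-(1 - \<sigma>)))"
    and K: "0 < K"
    and P_lin: "\<And>f. linear (P f)" "\<And>g. linear (\<lambda>f. P f g)"
    and P_bound: "\<And>f g. norm (P f g) \<le> K * norm f * norm g"
    and \<xi>_cont: "continuous_on {0..} \<xi>"
    and U: "mono_on {0..} U" "\<And>t. t \<ge> 0 \<Longrightarrow> U t \<ge> 0"
    and U_int: "\<And>t. t \<ge> 0 \<Longrightarrow> integral {0..t} um \<le> U t"
    and Xi: "mono_on {0..} Xi" "\<And>t. t \<ge> 0 \<Longrightarrow> Xi t \<ge> 0"
    and Xi_bound: "\<And>t. t \<ge> 0 \<Longrightarrow> norm (\<xi> t) \<le> Xi t"
begin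

lemma SmF_lin: assumes "t > 0" shows "linear (SmF t)"
proof -
  interpret i: bounded_linear i2 by (rule i2(1))
  interpret s: linear "S t" using S_lin assms by simp
  show ?thesis
  proof (rule linearI)
    fix x y show "SmF t (x + y) = SmF t x + SmF t y"
      by (rule injD[OF i2(2)]) (simp add: SmF assms i.add s.add)
  next
    fix c x show "SmF t (c *\<^sub>R x) = c *\<^sub>R SmF t x"
      by (rule injD[OF i2(2)]) (simp add: SmF assms i.scale s.scale)
  qed
qed

lemma um_bound0: obtains c \<delta> where "c > 0" "\<delta> > 0" "\<And>x. 0 < x \<Longrightarrow> x < \<delta> \<Longrightarrow> um x \<le> c * x powr (\<sigma> - 1)"
proof -
  obtain c where c: "c > 0" "eventually (\<lambda>x. norm (um x) \<le> c * norm (x powr (-(1 - \<sigma>)))) (at_right 0)"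
    using um_O by (elim landau_o.bigE)
  then obtain \<delta> where d: "\<delta> > 0" "\<And>y. y > 0 \<Longrightarrow> y < \<delta> \<Longrightarrow> norm (um y) \<le> c * norm (y powr (-(1 - \<sigma>)))"
    unfolding eventually_at_right_field by auto
  show ?thesis
  proof (rule that[OF c(1) d(1)])
    fix x :: real assume x: "0 < x" "x < \<delta>"
    have "um x \<le> norm (um x)" by simp
    also have "\<dots> \<le> c * norm (x powr (-(1 - \<sigma>)))" using d(2) x by blast
    also have "norm (x powr (-(1 - \<sigma>))) = x powr (\<sigma> - 1)" using x by simp
    finally show "um x \<le> c * x powr (\<sigma> - 1)" .
  qed
qed

lemma um_int: assumes "t \<ge> 0" shows "um integrable_on {0..t}"
proof -
  obtain c \<delta> where cd: "c > 0" "\<delta> > 0" "\<And>x. 0 < x \<Longrightarrow> x < \<delta> \<Longrightarrow> um x \<le> c * x powr (\<sigma> - 1)"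
    using um_bound0 by blast
  define d where "d = \<delta> / 2"
  have d: "0 < d" "d < \<delta>" using cd by (auto simp: d_def)
  have i0: "um integrable_on {0..d}"
  proof (rule improper_left[where g = "\<lambda>x. c * x powr (\<sigma> - 1)"])
    show "continuous_on {0<..d} um" by (rule continuous_on_subset[OF um(1)]) auto
    show "norm (um x) \<le> c * x powr (\<sigma> - 1)" if "x \<in> {0<..d}" for x
      using cd(3)[of x] um(2)[of x] that d by auto
    have "((\<lambda>x. x powr (\<sigma> - 1)) has_integral (d powr (\<sigma> - 1 + 1) / (\<sigma> - 1 + 1))) {0..d}"
      by (rule has_integral_powr_from_0) (use sigma d in auto)
    then show "(\<lambda>x. c * x powr (\<sigma> - 1)) integrable_on {0..d}"
      by (intro integrable_on_mult_right) blast
  qed (use d in auto)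
  show ?thesis
  proof (cases "t \<le> d")
    case True then show ?thesis using assms by (intro integrable_subinterval_real[OF i0]) auto
  next
    case False
    have "um integrable_on {d..t}"
      by (rule integrable_continuous_interval, rule continuous_on_subset[OF um(1)]) (use d in auto)
    then show ?thesis using Henstock_Kurzweil_Integration.integrable_combine[where a=0 and c=d and b=t and f=um] i0 d False by auto
  qed
qed

lemma um_int_nonneg: assumes "0 \<le> a" shows "0 \<le> integral {a..b} um"
proof -
  have ia: "um integrable_on {a..b}"
  proof (cases "a \<le> b")
    case True then show ?thesis using integrable_subinterval_real[OF um_int[of b]] assms by auto
  next
    case False then show ?thesis by (simp add: integrable_on_empty) 
  qed
  have e: "integral {a..b} um = integral {a..b} (\<lambda>x. if x = 0 then 1 else um x)"
    by (rule integral_spike[of "{0}"]) auto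
  have "(\<lambda>x. if x = 0 then 1 else um x) integrable_on {a..b}"
    by (rule integrable_spike[OF ia, of "{0}"]) auto
  then have "0 \<le> integral {a..b} (\<lambda>x. if x = 0 then 1 else um x)"
    by (rule integral_nonneg) (use assms um(2) in \<open>auto simp: less_le\<close>)
  then show ?thesis using e by simp
qed

lemma um_int_mono: assumes "0 \<le> a" "a \<le> b" shows "integral {0..a} um \<le> integral {0..b} um"
proof -
  have "integral {0..a} um + integral {a..b} um = integral {0..b} um"
    by (rule Henstock_Kurzweil_Integration.integral_combine) (use assms um_int in auto)
  with um_int_nonneg[OF assms(1), of b] show ?thesis by linarith
qed

end

lemma param_int_cont:
  fixes f :: "real \<Rightarrow> real \<Rightarrow> 'a::banach"
  assumes c: "continuous_on ({0..b}\<times>{0..b}) (\<lambda>(t,r). f t r)"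
  shows "continuous_on {0..b} (\<lambda>t. integral {0..t} (f t))"
  unfolding continuous_on_iff
proof (intro ballI allI impI)
  fix t e :: real assume t: "t \<in> {0..b}" and e: "e > 0"
  have b: "0 \<le> b" using t by auto
  have "uniformly_continuous_on ({0..b}\<times>{0..b}) (\<lambda>(t,r). f t r)"
    by (rule compact_uniformly_continuous[OF c]) (simp add: compact_Times)
  moreover have e2: "e / (2 * (b + 1)) > 0" using e b by simp
  ultimately obtain d1 where d1: "d1 > 0"
    "\<And>p p'. p \<in> {0..b}\<times>{0..b} \<Longrightarrow> p' \<in> {0..b}\<times>{0..b} \<Longrightarrow> dist p' p < d1 \<Longrightarrow>
       dist ((\<lambda>(t,r). f t r) p') ((\<lambda>(t,r). f t r) p) < e / (2 * (b + 1))"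
    unfolding uniformly_continuous_on_def by metis
  have cft: "continuous_on {0..b} (f s)" if "s \<in> {0..b}" for s
  proof -
    have "continuous_on {0..b} (\<lambda>r. (\<lambda>(t,r). f t r) (s, r))"
      by (rule continuous_on_compose2[OF c]) (use that in \<open>auto intro!: continuous_intros\<close>)
    then show ?thesis by simp
  qed
  have "continuous_on {0..b} (\<lambda>x. integral {0..x} (f t))"
    by (rule indefinite_integral_continuous_1, rule integrable_continuous_interval[OF cft[OF t]])
  then obtain d2 where d2: "d2 > 0" "\<And>x'. x' \<in> {0..b} \<Longrightarrow> dist x' t < d2 \<Longrightarrow>
      dist (integral {0..x'} (f t)) (integral {0..t} (f t)) < e / 2"
    unfolding continuous_on_iff using t e by (metis half_gt_zero)
  show "\<exists>d>0. \<forall>x'\<in>{0..b}. dist x' t < d \<longrightarrow> dist (integral {0..x'} (f x')) (integral {0..t} (f t)) < e"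
  proof (intro exI[of _ "min d1 d2"] conjI ballI impI)
    fix x' assume x': "x' \<in> {0..b}" "dist x' t < min d1 d2"
    have i1: "f x' integrable_on {0..x'}"
      by (rule integrable_continuous_interval, rule continuous_on_subset[OF cft[OF x'(1)]]) (use x' in auto)
    have i2: "f t integrable_on {0..x'}"
      by (rule integrable_continuous_interval, rule continuous_on_subset[OF cft[OF t]]) (use x' in auto)
    have "norm (integral {0..x'} (\<lambda>r. f x' r - f t r)) \<le> integral {0..x'} (\<lambda>r. e / (2 * (b + 1)))"
    proof (rule integral_norm_bound_integral)
      show "(\<lambda>r. f x' r - f t r) integrable_on {0..x'}" using i1 i2 by (rule integrable_diff)
      show "(\<lambda>r. e / (2 * (b + 1))) integrable_on {0..x'}" by (rule integrable_const_ivl)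
      fix r assume r: "r \<in> {0..x'}"
      have "dist ((\<lambda>(t,r). f t r) (x', r)) ((\<lambda>(t,r). f t r) (t, r)) < e / (2 * (b + 1))"
        by (rule d1(2)) (use x' t r in \<open>auto simp: dist_Pair_Pair\<close>)
      then show "norm (f x' r - f t r) \<le> e / (2 * (b + 1))" by (simp add: dist_norm)
    qed
    also have "\<dots> = x' * (e / (2 * (b + 1)))" using x' by simp
    also have "\<dots> < e / 2"
    proof -
      have "x' * (e / (2 * (b + 1))) \<le> b * (e / (2 * (b + 1)))"
        using x' e2 by (intro mult_right_mono) auto
      also have "\<dots> < (b + 1) * (e / (2 * (b + 1)))" using e2 by (intro mult_strict_right_mono) auto
      also have "\<dots> = e / 2" using b by (simp add: field_simps)
      finally show ?thesis .
    qed
    finally have A: "norm (integral {0..x'} (\<lambda>r. f x' r - f t r)) < e / 2" .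
    have B: "dist (integral {0..x'} (f t)) (integral {0..t} (f t)) < e / 2"
      using d2(2)[OF x'(1)] x'(2) by auto
    have "integral {0..x'} (f x') - integral {0..t} (f t)
        = integral {0..x'} (\<lambda>r. f x' r - f t r) + (integral {0..x'} (f t) - integral {0..t} (f t))"
      using integral_diff[OF i1 i2] by simp
    then have "dist (integral {0..x'} (f x')) (integral {0..t} (f t))
       = norm (integral {0..x'} (\<lambda>r. f x' r - f t r) + (integral {0..x'} (f t) - integral {0..t} (f t)))"
      by (simp add: dist_norm add_diff_eq)
    also have "\<dots> \<le> norm (integral {0..x'} (\<lambda>r. f x' r - f t r)) + norm (integral {0..x'} (f t) - integral {0..t} (f t))"
      by (rule norm_triangle_ineq)
    finally have "dist (integral {0..x'} (f x')) (integral {0..t} (f t))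
       \<le> norm (integral {0..x'} (\<lambda>r. f x' r - f t r)) + dist (integral {0..x'} (f t)) (integral {0..t} (f t))"
      by (simp add: dist_norm)
    with A B show "dist (integral {0..x'} (f x')) (integral {0..t} (f t)) < e" by linarith
  qed (use d1 d2 in auto)
qed

context setting begin

definition ker where "ker r x = (if 0 < r then SmF r x else 0)"
definition conv where "conv h t = integral {0..t} (\<lambda>r. ker r (h (t - r)))"

lemma ker_lin: "linear (ker r)"
proof (cases "0 < r")
  case True
  then have "ker r = SmF r" by (auto simp: ker_def)
  then show ?thesis using SmF_lin[OF True] by simp
next
  case False
  then have "ker r = (\<lambda>x. 0)" by (auto simp: ker_def)
  then show ?thesis by (simp add: linear_zero)
qed

lemma ker_bound: "0 < r \<Longrightarrow> norm (ker r x) \<le> um r * norm x"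
  by (simp add: ker_def SmF_bound)

lemma ker_cont:
  assumes h: "continuous_on {0..t} h"
  shows "continuous_on {0<..t} (\<lambda>r. ker r (h (t - r)))"
proof -
  have c1: "continuous_on {0<..t} (\<lambda>r. h (t - r))"
    by (rule continuous_on_compose2[OF h]) (auto intro!: continuous_intros)
  have "continuous_on {0<..t} (\<lambda>r. (\<lambda>(f, t). SmF t f) (h (t - r), r))"
    by (rule continuous_on_compose2[OF SmF_cont]) (auto intro!: continuous_intros c1)
  then show ?thesis
    by (rule continuous_on_cong[THEN iffD1, rotated 2]) (auto simp: ker_def)
qed

lemma conv_int:
  assumes c: "0 \<le> c" "c \<le> t" and h: "continuous_on {0..t} h"
    and H: "\<And>s. s \<in> {0..t} \<Longrightarrow> norm (h s) \<le> H"
  shows "(\<lambda>r. ker r (h (t - r))) integrable_on {0..c}"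
    "norm (integral {0..c} (\<lambda>r. ker r (h (t - r)))) \<le> H * integral {0..c} um"
proof -
  have H0: "0 \<le> H" using H[of 0] c by (smt (verit) atLeastAtMost_iff norm_ge_zero)
  have bd: "norm (ker r (h (t - r))) \<le> um r * H" if "r \<in> {0<..c}" for r
  proof -
    have "norm (ker r (h (t - r))) \<le> um r * norm (h (t - r))" using that by (intro ker_bound) auto
    also have "\<dots> \<le> um r * H" using that c um(2)[of r] by (intro mult_left_mono H) auto
    finally show ?thesis .
  qed
  have umi: "um integrable_on {0..c}" using um_int c by simp
  show i: "(\<lambda>r. ker r (h (t - r))) integrable_on {0..c}"
    by (rule improper_left[OF c(1) continuous_on_subset[OF ker_cont[OF h]] bd])
       (use c umi in \<open>auto intro: integrable_on_mult_left\<close>)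
  have gi: "(\<lambda>r. if r = 0 then 0 else um r * H) integrable_on {0..c}"
    by (rule integrable_spike[OF integrable_on_mult_left[OF umi], of "{0}"]) auto
  have "norm (integral {0..c} (\<lambda>r. ker r (h (t - r)))) \<le> integral {0..c} (\<lambda>r. if r = 0 then 0 else um r * H)"
    by (rule integral_norm_bound_integral[OF i gi]) (use bd in \<open>auto simp: ker_def\<close>)
  also have "\<dots> = integral {0..c} (\<lambda>r. um r * H)"
    by (rule integral_spike[of "{0}"]) auto
  also have "\<dots> = H * integral {0..c} um" by simp
  finally show "norm (integral {0..c} (\<lambda>r. ker r (h (t - r)))) \<le> H * integral {0..c} um" .
qed

lemma conv_sub:
  assumes "(\<lambda>r. ker r (h1 (t - r))) integrable_on {0..t}" "(\<lambda>r. ker r (h2 (t - r))) integrable_on {0..t}"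
  shows "conv h1 t - conv h2 t = conv (\<lambda>s. h1 s - h2 s) t"
  unfolding conv_def
  using integral_diff[OF assms] by (simp add: linear_diff[OF ker_lin])

lemma conv_i2:
  assumes "(\<lambda>r. ker r (h (t - r))) integrable_on {0..t}"
  shows "((\<lambda>s. S (t - s) (h s)) has_integral i2 (conv h t)) {0..t}"
proof -
  have "((i2 \<circ> (\<lambda>r. ker r (h (t - r)))) has_integral i2 (conv h t)) {0..t}"
    unfolding conv_def by (rule has_integral_linear[OF integrable_integral[OF assms] i2(1)])
  then have "((\<lambda>r. S r (h (t - r))) has_integral i2 (conv h t)) {0..t}"
    by (rule has_integral_spike_finite[of "{0}", rotated 2]) (auto simp: ker_def SmF)
  from reflect_t[OF this] show ?thesis by simp
qed

end

context setting begin

lemma beta_tendsto: "((\<lambda>d. H * (integral {0..d} um + d * um d)) \<longlongrightarrow> 0) (at_right 0)"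
proof -
  have "continuous_on {0..1} (\<lambda>x. integral {0..x} um)"
    by (rule indefinite_integral_continuous_1[OF um_int]) simp
  then have "((\<lambda>x. integral {0..x} um) \<longlongrightarrow> integral {0..0} um) (at 0 within {0..1})"
    unfolding continuous_on_def by (elim ballE[of _ _ 0]) auto
  then have l1: "((\<lambda>x. integral {0..x} um) \<longlongrightarrow> 0) (at_right 0)"
    by (simp add: at_within_Icc_at_right)
  obtain c \<delta> where cd: "c > 0" "\<delta> > 0" "\<And>x. 0 < x \<Longrightarrow> x < \<delta> \<Longrightarrow> um x \<le> c * x powr (\<sigma> - 1)"
    using um_bound0 by blast
  have "((\<lambda>d::real. d powr \<sigma>) \<longlongrightarrow> 0) (at_right 0)"
    by (rule tendsto_zero_powrI[where b=\<sigma>]) (auto simp: sigma eventually_at_right_field intro: exI[of _ 1] tendsto_ident_at)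
  then have l3: "((\<lambda>d::real. c * d powr \<sigma>) \<longlongrightarrow> 0) (at_right 0)"
    using tendsto_mult_right_zero by blast
  have ev1: "\<forall>\<^sub>F d in at_right 0. 0 \<le> d * um d"
    unfolding eventually_at_right_field using um(2) by (intro exI[of _ 1]) (auto intro: less_imp_le)
  have ev2: "\<forall>\<^sub>F d in at_right 0. d * um d \<le> c * d powr \<sigma>"
    unfolding eventually_at_right_field
  proof (intro exI[of _ \<delta>] conjI allI impI)
    fix y :: real assume y: "0 < y" "y < \<delta>"
    have "y * um y \<le> y * (c * y powr (\<sigma> - 1))" using cd(3)[OF y] y by (intro mult_left_mono) auto
    also have "\<dots> = c * y powr \<sigma>" using y by (simp add: powr_diff)
    finally show "y * um y \<le> c * y powr \<sigma>" .
  qed (use cd in auto)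
  have l2: "((\<lambda>d. d * um d) \<longlongrightarrow> 0) (at_right 0)"
    by (rule tendsto_sandwich[OF ev1 ev2]) (auto intro: l3)
  have "((\<lambda>d. H * (integral {0..d} um + d * um d)) \<longlongrightarrow> H * (0 + 0)) (at_right 0)"
    by (intro tendsto_intros l1 l2)
  then show ?thesis by simp
qed

lemma conv_cont:
  assumes b: "0 \<le> b" and h: "continuous_on {0..b} h" and H: "\<And>s. s \<in> {0..b} \<Longrightarrow> norm (h s) \<le> H"
  shows "continuous_on {0..b} (conv h)"
proof -
  define B where "B d t r = SmF (max r d) (h (max 0 (t - r)))" for d t r
  define \<Phi> where "\<Phi> d t = integral {0..t} (B d t)" for d t
  have jc: "continuous_on ({0..b}\<times>{0..b}) (\<lambda>(t,r). B d t r)" if d: "d > 0" for d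
  proof -
    have c1: "continuous_on ({0..b}\<times>{0..b}) (\<lambda>p. h (max 0 (fst p - snd p)))"
      by (rule continuous_on_compose2[OF h]) (auto intro!: continuous_intros)
    have "continuous_on ({0..b}\<times>{0..b}) (\<lambda>p. (\<lambda>(f, t). SmF t f) (h (max 0 (fst p - snd p)), max (snd p) d))"
      by (rule continuous_on_compose2[OF SmF_cont]) (use d in \<open>auto intro!: continuous_intros c1\<close>)
    then show ?thesis by (simp add: B_def case_prod_beta')
  qed
  have c\<Phi>: "continuous_on {0..b} (\<Phi> d)" if "d > 0" for d
    unfolding \<Phi>_def by (rule param_int_cont[OF jc[OF that]])
  have Bi: "B d t integrable_on {0..c}" if "d > 0" "t \<in> {0..b}" "0 \<le> c" "c \<le> b" for d t c
  proof -
    have "continuous_on {0..b} (\<lambda>r. (\<lambda>(t,r). B d t r) (t, r))"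
      by (rule continuous_on_compose2[OF jc[OF that(1)]]) (use that in \<open>auto intro!: continuous_intros\<close>)
    then show ?thesis using that
      by (intro integrable_continuous_interval) (auto elim: continuous_on_subset)
  qed
  have hs: "continuous_on {0..t} h" if "t \<in> {0..b}" for t
    by (rule continuous_on_subset[OF h]) (use that in auto)
  have small: "norm (integral {0..c} (\<lambda>r. ker r (h (t - r)))) + norm (integral {0..c} (B d t))
      \<le> H * (integral {0..d} um + d * um d)"
    if d: "d > 0" and t: "t \<in> {0..b}" and c: "0 \<le> c" "c \<le> t" "c \<le> d" for d t c
  proof -
    have H0: "0 \<le> H" using H[of 0] b by (smt (verit) atLeastAtMost_iff norm_ge_zero)
    have "norm (integral {0..c} (\<lambda>r. ker r (h (t - r)))) \<le> H * integral {0..c} um"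
      by (rule conv_int(2)[OF c(1,2) hs[OF t]]) (use t in \<open>auto intro: H\<close>)
    also have "\<dots> \<le> H * integral {0..d} um" using um_int_mono[OF c(1,3)] H0 by (intro mult_left_mono)
    finally have A: "norm (integral {0..c} (\<lambda>r. ker r (h (t - r)))) \<le> H * integral {0..d} um" .
    have "norm (integral {0..c} (B d t)) \<le> integral {0..c} (\<lambda>r. um d * H)"
    proof (rule integral_norm_bound_integral)
      show "B d t integrable_on {0..c}" using Bi[OF d t c(1)] c t by auto
      fix r assume r: "r \<in> {0..c}"
      have "norm (B d t r) \<le> um (max r d) * norm (h (max 0 (t - r)))"
        unfolding B_def using d by (intro SmF_bound) auto
      also have "\<dots> = um d * norm (h (max 0 (t - r)))" using r c by (simp add: max_def)
      also have "\<dots> \<le> um d * H" using um(2)[OF d] r c t by (intro mult_left_mono H) auto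
      finally show "norm (B d t r) \<le> um d * H" .
    qed auto
    also have "\<dots> = c * (um d * H)" using c by simp
    also have "\<dots> \<le> d * (um d * H)" using c um(2)[OF d] H0 by (intro mult_right_mono) auto
    finally show ?thesis using A by (simp add: algebra_simps)
  qed
  have est: "norm (conv h t - \<Phi> d t) \<le> H * (integral {0..d} um + d * um d)"
    if d: "d > 0" and t: "t \<in> {0..b}" for d t
  proof (cases "t \<le> d")
    case True
    have "norm (conv h t - \<Phi> d t) \<le> norm (conv h t) + norm (\<Phi> d t)" by (rule norm_triangle_ineq4)
    also have "\<dots> \<le> H * (integral {0..d} um + d * um d)"
      using small[OF d t _ order.refl True] t unfolding conv_def \<Phi>_def by auto
    finally show ?thesis .
  next
    case False
    have Ai: "(\<lambda>r. ker r (h (t - r))) integrable_on {0..t}"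
      by (rule conv_int(1)[OF _ order.refl hs[OF t]]) (use t in \<open>auto intro: H\<close>)
    have e1: "conv h t = integral {0..d} (\<lambda>r. ker r (h (t - r))) + integral {d..t} (\<lambda>r. ker r (h (t - r)))"
      unfolding conv_def
      by (rule Henstock_Kurzweil_Integration.integral_combine[symmetric]) (use False d Ai in auto)
    have e2: "\<Phi> d t = integral {0..d} (B d t) + integral {d..t} (B d t)"
      unfolding \<Phi>_def
      by (rule Henstock_Kurzweil_Integration.integral_combine[symmetric]) (use False d t Bi in auto)
    have e3: "integral {d..t} (\<lambda>r. ker r (h (t - r))) = integral {d..t} (B d t)"
      by (rule integral_cong) (use d in \<open>auto simp: ker_def B_def\<close>)
    have "norm (conv h t - \<Phi> d t) = norm (integral {0..d} (\<lambda>r. ker r (h (t - r))) - integral {0..d} (B d t))"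
      using e1 e2 e3 by simp
    also have "\<dots> \<le> norm (integral {0..d} (\<lambda>r. ker r (h (t - r)))) + norm (integral {0..d} (B d t))"
      by (rule norm_triangle_ineq4)
    also have "\<dots> \<le> H * (integral {0..d} um + d * um d)"
      using small[OF d t _ _ order.refl] False d by auto
    finally show ?thesis .
  qed
  have ul: "uniform_limit {0..b} \<Phi> (conv h) (at_right 0)"
    unfolding uniform_limit_iff
  proof (intro allI impI)
    fix e :: real assume e: "e > 0"
    have "\<forall>\<^sub>F d in at_right 0. H * (integral {0..d} um + d * um d) < e"
      using order_tendstoD(2)[OF beta_tendsto e] .
    moreover have "\<forall>\<^sub>F d in at_right (0::real). d > 0" by (simp add: eventually_at_right_less)
    ultimately show "\<forall>\<^sub>F d in at_right 0. \<forall>t\<in>{0..b}. dist (\<Phi> d t) (conv h t) < e"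
    proof eventually_elim
      case (elim d)
      then show ?case using est by (smt (verit) dist_norm norm_minus_commute)
    qed
  qed
  show ?thesis
    by (rule uniform_limit_theorem[OF _ ul]) (auto simp: eventually_at_right_less c\<Phi> intro: eventually_mono[OF eventually_at_right_less])
qed

end

lemma chi_fix:
  fixes a F :: real
  assumes a: "0 \<le> a" and F: "0 \<le> F" and z: "4 * a * F \<le> 1"
  shows "0 \<le> F * chiX (4 * a * F) \<and> F + a * (F * chiX (4 * a * F))^2 \<le> F * chiX (4 * a * F)"
proof (cases "a = 0 \<or> F = 0")
  case True
  then show ?thesis using F by (auto simp: chiX_def)
next
  case False
  then have a: "a > 0" and F: "F > 0" using a F by auto
  define w where "w = sqrt (1 - 4 * a * F)"
  have w: "0 \<le> w" "w \<le> 1" "w^2 = 1 - 4 * a * F" using z a F by (auto simp: w_def real_sqrt_le_1_iff)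
  have M: "F * chiX (4 * a * F) = (1 - w) / (2 * a)"
    using a F by (simp add: chiX_def w_def field_simps)
  have Fe: "F = (1 - w^2) / (4 * a)" using w(3) a by (simp add: field_simps)
  have "F + a * ((1 - w) / (2 * a))^2 = (1 - w) / (2 * a)"
    using a Fe by (simp add: field_simps power2_eq_square) algebra
  then show ?thesis using M w a by simp
qed

context setting begin

lemma P_bb: "bounded_bilinear P"
proof
  fix a a' b b' :: 'f and r :: real
  show "P (a + a') b = P a b + P a' b" using linear_add[OF P_lin(2)[of b], of a a'] by simp
  show "P a (b + b') = P a b + P a b'" using linear_add[OF P_lin(1)[of a], of b b'] by simp
  show "P (r *\<^sub>R a) b = r *\<^sub>R P a b" using linear_scale[OF P_lin(2)[of b], of r a] by simp
  show "P a (r *\<^sub>R b) = r *\<^sub>R P a b" using linear_scale[OF P_lin(1)[of a], of r b] by simp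
  show "\<exists>K. \<forall>a b. norm (P a b) \<le> norm a * norm b * K"
    using P_bound by (intro exI[of _ K]) (simp add: algebra_simps)
qed

lemma P_diff_bound:
  "norm (P a a - P c c) \<le> K * (norm a + norm c) * norm (a - c)"
proof -
  interpret bb: bounded_bilinear P by (rule P_bb)
  have "P a a - P c c = P a (a - c) + P (a - c) c" by (simp add: bb.diff_left bb.diff_right)
  then have "norm (P a a - P c c) \<le> norm (P a (a - c)) + norm (P (a - c) c)" by (simp add: norm_triangle_ineq)
  also have "\<dots> \<le> K * norm a * norm (a - c) + K * norm (a - c) * norm c" by (intro add_mono P_bound)
  finally show ?thesis by (simp add: algebra_simps)
qed

definition Phi where "Phi f0 g t = SF t f0 + conv (\<lambda>s. P (g s) (g s) + \<xi> s) t"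
definition it where "it f0 n = (Phi f0 ^^ n) (\<lambda>_. 0)"
definition FF where "FF f0 b = norm f0 + Xi b * U b"
definition mm where "mm f0 b n = ((\<lambda>x. FF f0 b + K * U b * x^2) ^^ n) 0"

lemma it_0[simp]: "it f0 0 = (\<lambda>_. 0)" by (simp add: it_def)
lemma it_Suc: "it f0 (Suc n) = Phi f0 (it f0 n)" by (simp add: it_def)
lemma mm_0[simp]: "mm f0 b 0 = 0" by (simp add: mm_def)
lemma mm_Suc: "mm f0 b (Suc n) = FF f0 b + K * U b * (mm f0 b n)^2" by (simp add: mm_def)

lemma FF_nonneg: "0 \<le> b \<Longrightarrow> 0 \<le> FF f0 b" by (simp add: FF_def Xi(2) U(2))

lemma mm_nonneg: "0 \<le> b \<Longrightarrow> 0 \<le> mm f0 b n"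
  by (induction n) (auto simp: mm_Suc FF_nonneg less_imp_le[OF K] U(2) intro!: add_nonneg_nonneg mult_nonneg_nonneg)

lemma mm_mono: assumes "0 \<le> b" shows "mm f0 b n \<le> mm f0 b (Suc n)"
proof (induction n)
  case 0 then show ?case using FF_nonneg[OF assms] by (simp add: mm_Suc)
next
  case (Suc n)
  have "(mm f0 b n)^2 \<le> (mm f0 b (Suc n))^2" using Suc mm_nonneg[OF assms] by (intro power_mono) auto
  then have "K * U b * (mm f0 b n)^2 \<le> K * U b * (mm f0 b (Suc n))^2"
    using K U(2)[OF assms] by (intro mult_left_mono) auto
  then show ?case by (simp add: mm_Suc[of _ _ "Suc n"] mm_Suc[of _ _ n])
qed

definition MM where "MM f0 b = FF f0 b * chiX (4 * K * U b * FF f0 b)"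

lemma mm_le_MM: assumes "0 \<le> b" "4 * K * U b * FF f0 b \<le> 1"
  shows "mm f0 b n \<le> MM f0 b"
proof -
  have a: "0 \<le> K * U b" using K U(2)[OF assms(1)] by simp
  have cf: "0 \<le> MM f0 b \<and> FF f0 b + K * U b * (MM f0 b)^2 \<le> MM f0 b"
    using chi_fix[OF a FF_nonneg[OF assms(1)]] assms(2) unfolding MM_def by (simp add: mult.assoc)
  show ?thesis
  proof (induction n)
    case 0 then show ?case using cf by simp
  next
    case (Suc n)
    have "(mm f0 b n)^2 \<le> (MM f0 b)^2" using Suc mm_nonneg[OF assms(1)] by (intro power_mono) auto
    then have "K * U b * (mm f0 b n)^2 \<le> K * U b * (MM f0 b)^2" using a by (intro mult_left_mono) auto
    then show ?case using cf by (simp add: mm_Suc)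
  qed
qed

lemma SF_f0_cont: "continuous_on {0..b} (\<lambda>t. SF t f0)"
proof -
  have "continuous_on {0..b} (\<lambda>t. (\<lambda>(f, t). SF t f) (f0, t))"
    by (rule continuous_on_compose2[OF SF_cont]) (auto intro!: continuous_intros)
  then show ?thesis by simp
qed

lemma h_cont:
  assumes "continuous_on {0..b} g"
  shows "continuous_on {0..b} (\<lambda>s. P (g s) (g s) + \<xi> s)"
proof -
  interpret bb: bounded_bilinear P by (rule P_bb)
  have "continuous_on {0..b} \<xi>" by (rule continuous_on_subset[OF \<xi>_cont]) auto
  then show ?thesis by (intro continuous_intros bb.continuous_on assms)
qed

lemma h_bound:
  assumes "0 \<le> b" "s \<in> {0..b}" "norm (g s) \<le> m"
  shows "norm (P (g s) (g s) + \<xi> s) \<le> K * m^2 + Xi b"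
proof -
  have "norm (P (g s) (g s) + \<xi> s) \<le> norm (P (g s) (g s)) + norm (\<xi> s)" by (rule norm_triangle_ineq)
  also have "norm (P (g s) (g s)) \<le> K * norm (g s) * norm (g s)" by (rule P_bound)
  also have "\<dots> \<le> K * m^2"
  proof -
    have "norm (g s) * norm (g s) \<le> m * m" by (rule mult_mono) (use assms in \<open>auto intro: order_trans[OF norm_ge_zero]\<close>)
    then show ?thesis using K by (simp add: power2_eq_square mult.assoc)
  qed
  also have "norm (\<xi> s) \<le> Xi s" using assms by (intro Xi_bound) auto
  also have "Xi s \<le> Xi b" using assms by (intro mono_onD[OF Xi(1)]) auto
  finally show ?thesis by simp
qed

lemma it_props:
  assumes b: "0 \<le> b"
  shows "continuous_on {0..b} (it f0 n) \<and> (\<forall>t\<in>{0..b}. norm (it f0 n t) \<le> mm f0 b n)"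
proof (induction n)
  case 0 then show ?case by simp
next
  case (Suc n)
  let ?g = "it f0 n"
  let ?h = "\<lambda>s. P (?g s) (?g s) + \<xi> s"
  let ?H = "K * (mm f0 b n)^2 + Xi b"
  have hc: "continuous_on {0..b} ?h" using Suc h_cont by blast
  have hb: "norm (?h s) \<le> ?H" if "s \<in> {0..b}" for s using h_bound[OF b that] Suc that by blast
  have H0: "0 \<le> ?H" using K Xi(2)[OF b] by simp
  have c: "continuous_on {0..b} (it f0 (Suc n))"
    unfolding it_Suc Phi_def fun_eq_iff
    by (intro continuous_on_add SF_f0_cont conv_cont[OF b hc hb])
  have "norm (it f0 (Suc n) t) \<le> mm f0 b (Suc n)" if t: "t \<in> {0..b}" for t
  proof -
    have hct: "continuous_on {0..t} ?h" by (rule continuous_on_subset[OF hc]) (use t in auto)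
    have "norm (conv ?h t) \<le> ?H * integral {0..t} um"
      unfolding conv_def by (rule conv_int(2)[OF _ order.refl hct]) (use t hb in auto)
    also have "\<dots> \<le> ?H * U b"
    proof (intro mult_left_mono H0)
      have "integral {0..t} um \<le> U t" using t U_int by auto
      also have "\<dots> \<le> U b" using t by (intro mono_onD[OF U(1)]) auto
      finally show "integral {0..t} um \<le> U b" .
    qed
    finally have A: "norm (conv ?h t) \<le> ?H * U b" .
    have B: "norm (SF t f0) \<le> norm f0" using t SF_bound by auto
    have "norm (it f0 (Suc n) t) \<le> norm (SF t f0) + norm (conv ?h t)"
      unfolding it_Suc Phi_def by (rule norm_triangle_ineq)
    also have "\<dots> \<le> mm f0 b (Suc n)" using A B by (simp add: mm_Suc FF_def algebra_simps)
    finally show ?thesis .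
  qed
  then show ?case using c by blast
qed

lemma it_diff:
  assumes b: "0 \<le> b"
  shows "\<forall>t\<in>{0..b}. norm (it f0 (Suc n) t - it f0 n t) \<le> mm f0 b (Suc n) - mm f0 b n"
proof (induction n)
  case 0 then show ?case using it_props[OF b, of f0 1] by simp
next
  case (Suc n)
  show ?case
  proof
    fix t assume t: "t \<in> {0..b}"
    let ?g1 = "it f0 (Suc n)" and ?g0 = "it f0 n"
    let ?h1 = "\<lambda>s. P (?g1 s) (?g1 s) + \<xi> s" and ?h0 = "\<lambda>s. P (?g0 s) (?g0 s) + \<xi> s"
    let ?m1 = "mm f0 b (Suc n)" and ?m0 = "mm f0 b n"
    have p1: "continuous_on {0..b} ?g1" "\<forall>t\<in>{0..b}. norm (?g1 t) \<le> ?m1" using it_props[OF b] by blast+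
    have p0: "continuous_on {0..b} ?g0" "\<forall>t\<in>{0..b}. norm (?g0 t) \<le> ?m0" using it_props[OF b] by blast+
    have hc1: "continuous_on {0..t} ?h1" by (rule continuous_on_subset[OF h_cont[OF p1(1)]]) (use t in auto)
    have hc0: "continuous_on {0..t} ?h0" by (rule continuous_on_subset[OF h_cont[OF p0(1)]]) (use t in auto)
    have i1: "(\<lambda>r. ker r (?h1 (t - r))) integrable_on {0..t}"
      by (rule conv_int(1)[OF _ order.refl hc1, of "K * ?m1^2 + Xi b"]) (use t p1 h_bound[OF b] in auto)
    have i0: "(\<lambda>r. ker r (?h0 (t - r))) integrable_on {0..t}"
      by (rule conv_int(1)[OF _ order.refl hc0, of "K * ?m0^2 + Xi b"]) (use t p0 h_bound[OF b] in auto)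
    have e: "it f0 (Suc (Suc n)) t - it f0 (Suc n) t = conv (\<lambda>s. ?h1 s - ?h0 s) t"
    proof -
      have a1: "it f0 (Suc (Suc n)) t = SF t f0 + conv ?h1 t" by (simp only: it_Suc[of f0 "Suc n"] Phi_def)
      have a0: "it f0 (Suc n) t = SF t f0 + conv ?h0 t" by (simp only: it_Suc[of f0 n] Phi_def)
      show ?thesis using conv_sub[OF i1 i0] unfolding a1 a0 by simp
    qed
    let ?Hd = "K * (?m1 + ?m0) * (?m1 - ?m0)"
    have Hd: "norm (?h1 s - ?h0 s) \<le> ?Hd" if s: "s \<in> {0..t}" for s
    proof -
      have "norm (?h1 s - ?h0 s) = norm (P (?g1 s) (?g1 s) - P (?g0 s) (?g0 s))" by simp
      also have "\<dots> \<le> K * (norm (?g1 s) + norm (?g0 s)) * norm (?g1 s - ?g0 s)" by (rule P_diff_bound)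
      also have "\<dots> \<le> ?Hd"
        using p1(2) p0(2) Suc s t K mm_nonneg[OF b, of f0 n] mm_nonneg[OF b, of f0 "Suc n"]
        by (intro mult_mono add_mono mult_left_mono) (auto intro: add_nonneg_nonneg)
      finally show ?thesis .
    qed
    have Hd0: "0 \<le> ?Hd" using K mm_mono[OF b, of f0 n] mm_nonneg[OF b] by (intro mult_nonneg_nonneg add_nonneg_nonneg) auto
    have hdc: "continuous_on {0..t} (\<lambda>s. ?h1 s - ?h0 s)" using hc1 hc0 by (rule continuous_on_diff)
    have "norm (conv (\<lambda>s. ?h1 s - ?h0 s) t) \<le> ?Hd * integral {0..t} um"
      unfolding conv_def by (rule conv_int(2)[OF _ order.refl hdc]) (use t Hd in auto)
    also have "\<dots> \<le> ?Hd * U b"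
    proof (intro mult_left_mono Hd0)
      have "integral {0..t} um \<le> U t" using t U_int by auto
      also have "\<dots> \<le> U b" using t by (intro mono_onD[OF U(1)]) auto
      finally show "integral {0..t} um \<le> U b" .
    qed
    also have "\<dots> = mm f0 b (Suc (Suc n)) - ?m1"
      by (simp add: mm_Suc[of _ _ "Suc n"] mm_Suc[of _ _ n] power2_eq_square algebra_simps)
    finally show "norm (it f0 (Suc (Suc n)) t - it f0 (Suc n) t) \<le> mm f0 b (Suc (Suc n)) - mm f0 b (Suc n)"
      using e by simp
  qed
qed

end

context setting begin

definition good where "good f0 b \<longleftrightarrow> 0 \<le> b \<and> 4 * K * U b * FF f0 b \<le> 1"
definition philim where "philim f0 t = lim (\<lambda>n. it f0 n t)"

lemma mm_lim:
  assumes g: "good f0 b"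
  obtains L where "mm f0 b \<longlonglongrightarrow> L" "\<And>n. mm f0 b n \<le> L" "L \<le> MM f0 b"
proof -
  have b: "0 \<le> b" and z: "4 * K * U b * FF f0 b \<le> 1" using g by (auto simp: good_def)
  have inc: "incseq (mm f0 b)" by (rule incseq_SucI) (rule mm_mono[OF b])
  obtain L where L: "mm f0 b \<longlonglongrightarrow> L" "\<forall>i. mm f0 b i \<le> L"
    using incseq_convergent[OF inc, of "MM f0 b"] mm_le_MM[OF b z] by blast
  have "L \<le> MM f0 b" by (rule Lim_bounded[OF L(1), of 0]) (use mm_le_MM[OF b z] in auto)
  then show ?thesis using L that by blast
qed

lemma tele:
  assumes b: "0 \<le> b" and t: "t \<in> {0..b}" and nk: "n \<le> k"
  shows "norm (it f0 k t - it f0 n t) \<le> mm f0 b k - mm f0 b n"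
  using nk
proof (induction k rule: dec_induct)
  case base then show ?case by simp
next
  case (step k)
  have "norm (it f0 (Suc k) t - it f0 n t) \<le> norm (it f0 (Suc k) t - it f0 k t) + norm (it f0 k t - it f0 n t)"
    using norm_triangle_ineq[of "it f0 (Suc k) t - it f0 k t" "it f0 k t - it f0 n t"] by simp
  also have "\<dots> \<le> (mm f0 b (Suc k) - mm f0 b k) + (mm f0 b k - mm f0 b n)"
    using it_diff[OF b, of f0 k] t step.IH by (intro add_mono) auto
  finally show ?case by simp
qed

lemma lim_props:
  assumes g: "good f0 b" and L: "mm f0 b \<longlonglongrightarrow> L" "\<And>n. mm f0 b n \<le> L" and t: "t \<in> {0..b}"
  shows "(\<lambda>n. it f0 n t) \<longlonglongrightarrow> philim f0 t" "norm (it f0 n t - philim f0 t) \<le> L - mm f0 b n"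
proof -
  have b: "0 \<le> b" using g by (simp add: good_def)
  have "Cauchy (\<lambda>n. it f0 n t)"
    unfolding Cauchy_def
  proof (intro allI impI)
    fix e :: real assume e: "e > 0"
    obtain M where M: "\<And>m n. m \<ge> M \<Longrightarrow> n \<ge> M \<Longrightarrow> dist (mm f0 b m) (mm f0 b n) < e"
      using LIMSEQ_imp_Cauchy[OF L(1)] e unfolding Cauchy_def by metis
    have "dist (it f0 m t) (it f0 n t) < e" if mn: "m \<ge> M" "n \<ge> M" for m n
    proof (cases "n \<le> m")
      case True
      have "dist (it f0 m t) (it f0 n t) \<le> mm f0 b m - mm f0 b n" using tele[OF b t True] by (simp add: dist_norm)
      also have "\<dots> \<le> dist (mm f0 b m) (mm f0 b n)" by (simp add: dist_real_def)
      finally show ?thesis using M[OF mn] by simp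
    next
      case False
      then have nm: "m \<le> n" by simp
      have "dist (it f0 m t) (it f0 n t) \<le> mm f0 b n - mm f0 b m"
        using tele[OF b t nm] by (simp add: dist_norm norm_minus_commute)
      also have "\<dots> \<le> dist (mm f0 b m) (mm f0 b n)" by (simp add: dist_real_def)
      finally show ?thesis using M[OF mn] by simp
    qed
    then show "\<exists>M. \<forall>m\<ge>M. \<forall>n\<ge>M. dist (it f0 m t) (it f0 n t) < e" by blast
  qed
  then show conv: "(\<lambda>n. it f0 n t) \<longlonglongrightarrow> philim f0 t"
    unfolding philim_def by (simp add: Cauchy_convergent_iff convergent_LIMSEQ_iff)
  have "(\<lambda>k. norm (it f0 k t - it f0 n t)) \<longlonglongrightarrow> norm (philim f0 t - it f0 n t)"
    by (intro tendsto_intros conv)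
  then have "norm (philim f0 t - it f0 n t) \<le> L - mm f0 b n"
  proof (rule Lim_bounded[of _ _ n], intro allI impI)
    fix k assume "n \<le> k"
    from tele[OF b t this, of f0] L(2)[of k]
    show "norm (it f0 k t - it f0 n t) \<le> L - mm f0 b n" by linarith
  qed
  then show "norm (it f0 n t - philim f0 t) \<le> L - mm f0 b n" by (simp add: norm_minus_commute)
qed

lemma philim_props:
  assumes g: "good f0 b"
  shows "continuous_on {0..b} (philim f0)"
    "\<And>t. t \<in> {0..b} \<Longrightarrow> norm (philim f0 t) \<le> MM f0 b"
    "((\<lambda>s. S (b - s) (P (philim f0 s) (philim f0 s) + \<xi> s)) has_integral (i2 (philim f0 b) - S b (i2 f0))) {0..b}"
proof -
  have b: "0 \<le> b" using g by (simp add: good_def)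
  obtain L where L: "mm f0 b \<longlonglongrightarrow> L" "\<And>n. mm f0 b n \<le> L" "L \<le> MM f0 b"
    using mm_lim[OF g] by blast
  note lp = lim_props[OF g L(1,2)]
  show nb: "norm (philim f0 t) \<le> MM f0 b" if t: "t \<in> {0..b}" for t
  proof -
    have "(\<lambda>n. norm (it f0 n t)) \<longlonglongrightarrow> norm (philim f0 t)" by (intro tendsto_intros lp(1)[OF t])
    then show ?thesis
    proof (rule Lim_bounded[of _ _ 0], intro allI impI)
      fix n :: nat
      have "norm (it f0 n t) \<le> mm f0 b n" using it_props[OF b, of f0 n] t by blast
      then show "norm (it f0 n t) \<le> MM f0 b" using L(2)[of n] L(3) by linarith
    qed
  qed
  have ul: "uniform_limit {0..b} (\<lambda>n. it f0 n) (philim f0) sequentially"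
    unfolding uniform_limit_iff
  proof (intro allI impI)
    fix e :: real assume e: "e > 0"
    have "\<forall>\<^sub>F n in sequentially. L - e < mm f0 b n" using order_tendstoD(1)[OF L(1)] e by simp
    then show "\<forall>\<^sub>F n in sequentially. \<forall>t\<in>{0..b}. dist (it f0 n t) (philim f0 t) < e"
    proof eventually_elim
      case (elim n)
      then show ?case using lp(2) by (smt (verit) dist_norm)
    qed
  qed
  show pc: "continuous_on {0..b} (philim f0)"
    by (rule uniform_limit_theorem[OF _ ul]) (use it_props[OF b] in auto)
  let ?h = "\<lambda>n s. P (it f0 n s) (it f0 n s) + \<xi> s"
  let ?hh = "\<lambda>s. P (philim f0 s) (philim f0 s) + \<xi> s"
  have MM0: "0 \<le> MM f0 b" using nb[of 0] b by (smt (verit) atLeastAtMost_iff norm_ge_zero)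
  have hhc: "continuous_on {0..b} ?hh" by (rule h_cont[OF pc])
  have hhi: "(\<lambda>r. ker r (?hh (b - r))) integrable_on {0..b}"
    by (rule conv_int(1)[OF b order.refl hhc, of "K * (MM f0 b)^2 + Xi b"]) (use nb h_bound[OF b] in auto)
  have hn: "continuous_on {0..b} (?h n)" for n by (rule h_cont) (use it_props[OF b] in auto)
  have hni: "(\<lambda>r. ker r (?h n (b - r))) integrable_on {0..b}" for n
    by (rule conv_int(1)[OF b order.refl hn, where H = "K * (mm f0 b n)^2 + Xi b"]) (use it_props[OF b] h_bound[OF b] in auto)
  define C where "C = K * (MM f0 b + MM f0 b) * integral {0..b} um"
  have est: "norm (conv (?h n) b - conv ?hh b) \<le> norm (L - mm f0 b n) * C" for n
  proof -
    have Ln: "0 \<le> L - mm f0 b n" using L(2)[of n] by simp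
    have d: "norm (?h n s - ?hh s) \<le> K * (MM f0 b + MM f0 b) * (L - mm f0 b n)" if s: "s \<in> {0..b}" for s
    proof -
      have "norm (?h n s - ?hh s) = norm (P (it f0 n s) (it f0 n s) - P (philim f0 s) (philim f0 s))" by simp
      also have "\<dots> \<le> K * (norm (it f0 n s) + norm (philim f0 s)) * norm (it f0 n s - philim f0 s)"
        by (rule P_diff_bound)
      also have "\<dots> \<le> K * (MM f0 b + MM f0 b) * (L - mm f0 b n)"
      proof -
        have a0: "norm (it f0 n s) \<le> mm f0 b n" using it_props[OF b, of f0 n] s by blast
        have a1: "norm (it f0 n s) \<le> MM f0 b" using a0 L(3) L(2)[of n] by linarith
        have a2: "norm (it f0 n s) + norm (philim f0 s) \<le> MM f0 b + MM f0 b" using a1 nb[OF s] by linarith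
        have a3: "K * (norm (it f0 n s) + norm (philim f0 s)) \<le> K * (MM f0 b + MM f0 b)"
          using a2 K by (intro mult_left_mono) auto
        show ?thesis by (rule mult_mono[OF a3 lp(2)[OF s, of n]]) (use K MM0 in auto)
      qed
      finally show ?thesis .
    qed
    have e1: "conv (?h n) b - conv ?hh b = conv (\<lambda>s. ?h n s - ?hh s) b" by (rule conv_sub[OF hni hhi])
    have e2: "norm (conv (\<lambda>s. ?h n s - ?hh s) b) \<le> (K * (MM f0 b + MM f0 b) * (L - mm f0 b n)) * integral {0..b} um"
      unfolding conv_def
      by (rule conv_int(2)[OF b order.refl continuous_on_diff[OF hn hhc]]) (rule d)
    have e3: "(K * (MM f0 b + MM f0 b) * (L - mm f0 b n)) * integral {0..b} um = norm (L - mm f0 b n) * C"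
      unfolding C_def real_norm_def abs_of_nonneg[OF Ln] by (simp only: mult.assoc mult.commute mult.left_commute)
    show ?thesis unfolding e1 e3[symmetric] by (rule e2)
  qed
  have "(\<lambda>n. L - mm f0 b n) \<longlonglongrightarrow> 0" using tendsto_diff[OF tendsto_const L(1), of L] by simp
  then have A: "(\<lambda>n. conv (?h n) b - conv ?hh b) \<longlonglongrightarrow> 0"
    by (rule tendsto_0_le[where K = C]) (intro always_eventually allI est)
  have "(\<lambda>n. (conv (?h n) b - conv ?hh b) + conv ?hh b) \<longlonglongrightarrow> 0 + conv ?hh b"
    by (rule tendsto_add[OF A tendsto_const])
  then have "(\<lambda>n. conv (?h n) b) \<longlonglongrightarrow> conv ?hh b" by simp
  then have B: "(\<lambda>n. SF b f0 + conv (?h n) b) \<longlonglongrightarrow> SF b f0 + conv ?hh b"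
    by (rule tendsto_add[OF tendsto_const])
  have "(\<lambda>n. it f0 (Suc n) b) = (\<lambda>n. SF b f0 + conv (?h n) b)"
    by (rule ext) (simp only: it_Suc Phi_def)
  then have "(\<lambda>n. it f0 (Suc n) b) \<longlonglongrightarrow> SF b f0 + conv ?hh b" using B by simp
  moreover have "(\<lambda>n. it f0 (Suc n) b) \<longlonglongrightarrow> philim f0 b"
  proof -
    have "(\<lambda>n. it f0 n b) \<longlonglongrightarrow> philim f0 b" using lp(1)[of b] b by simp
    from LIMSEQ_Suc[OF this] show ?thesis .
  qed
  ultimately have pe: "philim f0 b = SF b f0 + conv ?hh b" using LIMSEQ_unique by blast
  have "i2 (philim f0 b) - S b (i2 f0) = i2 (conv ?hh b)"
  proof -
    have "i2 (SF b f0 + conv ?hh b) = i2 (SF b f0) + i2 (conv ?hh b)"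
      by (rule linear_add[OF bounded_linear.linear[OF i2(1)]])
    then show ?thesis unfolding pe using SF[OF b, of f0] by simp
  qed
  then show "((\<lambda>s. S (b - s) (?hh s)) has_integral (i2 (philim f0 b) - S b (i2 f0))) {0..b}"
    using conv_i2[OF hhi] by simp
qed

end

lemma lipschitz_cont:
  fixes \<xi> :: "real \<Rightarrow> 'm::real_normed_vector"
  assumes "locally_lipschitz_nonneg \<xi>"
  shows "continuous_on {0..} \<xi>"
  unfolding continuous_on_iff
proof (intro ballI allI impI)
  fix t e :: real assume t: "t \<in> {0..}" and e: "e > 0"
  obtain L where L: "\<forall>s\<in>{0..t+1}. \<forall>r\<in>{0..t+1}. norm (\<xi> s - \<xi> r) \<le> L * \<bar>s - r\<bar>"
    using assms t unfolding locally_lipschitz_nonneg_def by (meson atLeast_iff add_nonneg_nonneg zero_le_one)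
  define d where "d = min 1 (e / (\<bar>L\<bar> + 1))"
  have d: "d > 0" using e by (simp add: d_def)
  show "\<exists>d>0. \<forall>x'\<in>{0..}. dist x' t < d \<longrightarrow> dist (\<xi> x') (\<xi> t) < e"
  proof (intro exI[of _ d] conjI ballI impI d)
    fix x' assume x': "x' \<in> {0..}" "dist x' t < d"
    have x1: "x' \<in> {0..t+1}" using x' t by (auto simp: d_def dist_real_def)
    have "dist (\<xi> x') (\<xi> t) \<le> L * \<bar>x' - t\<bar>" using L x1 t by (auto simp: dist_norm)
    also have "\<dots> \<le> (\<bar>L\<bar> + 1) * \<bar>x' - t\<bar>" by (intro mult_right_mono) auto
    also have "\<dots> < (\<bar>L\<bar> + 1) * (e / (\<bar>L\<bar> + 1))"
      using x' by (intro mult_strict_left_mono) (auto simp: d_def dist_real_def)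
    also have "\<dots> = e" by simp
    finally show "dist (\<xi> x') (\<xi> t) < e" .
  qed
qed

theorem proposition5p9:
  fixes i1 :: "'p::banach \<Rightarrow> 'f::banach"
    and i2 :: "'f \<Rightarrow> 'm::banach"
    and A :: "'p \<Rightarrow> 'm"
    and S :: "real \<Rightarrow> 'm \<Rightarrow> 'm"
    and SF :: "real \<Rightarrow> 'f \<Rightarrow> 'f"
    and SmF :: "real \<Rightarrow> 'm \<Rightarrow> 'f"
    and u um U Xi :: "real \<Rightarrow> real"
    and \<sigma> K :: real
    and P :: "'f \<Rightarrow> 'f \<Rightarrow> 'm"
    and \<xi> :: "real \<Rightarrow> 'm"
    and f0 :: 'f
    and T :: ereal
  assumes i1: "bounded_linear i1" "inj i1" "closure (range i1) = UNIV"
    and i2: "bounded_linear i2" "inj i2" "closure (range i2) = UNIV"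
    and A_lin: "linear A"
    and A_norm: "\<exists>c1>0. \<exists>c2>0. \<forall>f. c1 * norm f \<le> norm (i2 (i1 f)) + norm (A f)
                                   \<and> norm (i2 (i1 f)) + norm (A f) \<le> c2 * norm f"
    and S_sg: "sc_semigroup S"
    and S_dom: "\<forall>x. (\<exists>y. gen_at S x y) \<longleftrightarrow> x \<in> range (i2 \<circ> i1)"
    and S_gen: "\<forall>f. gen_at S (i2 (i1 f)) (A f)"
    and SF: "\<forall>t\<ge>0. \<forall>f. i2 (SF t f) = S t (i2 f)"
    and SF_cont: "continuous_on (UNIV \<times> {0..}) (\<lambda>(f, t). SF t f)"
    and u: "continuous_on {0..} u" "\<forall>t\<ge>0. u t > 0"
    and SF_bound: "\<forall>t\<ge>0. \<forall>f. norm (SF t f) \<le> u t * norm f"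
    and SmF: "\<forall>t>0. \<forall>f. i2 (SmF t f) = S t f"
    and SmF_cont: "continuous_on (UNIV \<times> {0<..}) (\<lambda>(f, t). SmF t f)"
    and um: "continuous_on {0<..} um" "\<forall>t>0. um t > 0"
    and SmF_bound: "\<forall>t>0. \<forall>f. norm (SmF t f) \<le> um t * norm f"
    and sigma: "0 < \<sigma>" "\<sigma> \<le> 1"
    and um_O: "um \<in> O[at_right 0](\<lambda>t. t powr (-(1 - \<sigma>)))"
    and K: "0 < K"
    and P_lin: "\<forall>f. linear (P f)" "\<forall>g. linear (\<lambda>f. P f g)"
    and P_bound: "\<forall>f g. norm (P f g) \<le> K * norm f * norm g"
    and \<xi>_lip: "locally_lipschitz_nonneg \<xi>"
    and U: "continuous_on {0..} U" "mono_on {0..} U" "\<forall>t\<ge>0. U t \<ge> 0" "U 0 = 0"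
    and U_int: "\<forall>t\<ge>0. integral {0..t} um \<le> U t"
    and Xi: "continuous_on {0..} Xi" "mono_on {0..} Xi" "\<forall>t\<ge>0. Xi t \<ge> 0"
    and Xi_bound: "\<forall>t\<ge>0. norm (\<xi> t) \<le> Xi t"
    and u_le1: "\<forall>t\<ge>0. u t \<le> 1"
    and T: "0 < T"
    and small: "ereal (4 * K) * ext_val U T * (ereal (norm f0) + ext_val Xi T * ext_val U T) \<le> 1"
  shows "\<exists>\<phi> :: real \<Rightarrow> 'f.
           continuous_on {t. 0 \<le> t \<and> ereal t < T} \<phi> \<and>
           (\<forall>t. 0 \<le> t \<and> ereal t < T \<longrightarrow>
              ((\<lambda>s. S (t - s) (P (\<phi> s) (\<phi> s) + \<xi> s)) has_integral (i2 (\<phi> t) - S t (i2 f0))) {0..t}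
            \<and> norm (\<phi> t) \<le> (norm f0 + Xi t * U t) * chiX (4 * K * U t * (norm f0 + Xi t * U t)))"
proof -
  have S_lin: "linear (S t)" if "t \<ge> 0" for t
    using S_sg that unfolding sc_semigroup_def by (auto intro: bounded_linear.linear)
  have SFb: "norm (SF t f) \<le> norm f" if "t \<ge> 0" for t f
  proof -
    have "norm (SF t f) \<le> u t * norm f" using SF_bound that by blast
    also have "\<dots> \<le> 1 * norm f" using u_le1 that by (intro mult_right_mono) auto
    finally show ?thesis by simp
  qed
  have loc: "setting i2 S SF SmF um U Xi \<sigma> K P \<xi>"
    unfolding setting_def
  proof (intro conjI allI impI, goal_cases)
    case 1 then show ?case using i2(1) by simp
  next
    case 2 then show ?case using i2(2) by simp
  next
    case 3 then show ?case using S_lin by simp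
  next
    case 4 then show ?case using SF by simp
  next
    case 5 then show ?case using SF_cont by simp
  next
    case 6 then show ?case using SFb by simp
  next
    case 7 then show ?case using SmF by simp
  next
    case 8 then show ?case using SmF_cont by simp
  next
    case 9 then show ?case using um(1) by simp
  next
    case 10 then show ?case using um(2) by simp
  next
    case 11 then show ?case using SmF_bound by simp
  next
    case 12 then show ?case using sigma(1) by simp
  next
    case 13 then show ?case using um_O by simp
  next
    case 14 then show ?case using K by simp
  next
    case 15 then show ?case using P_lin(1) by simp
  next
    case 16 then show ?case using P_lin(2) by simp
  next
    case 17 then show ?case using P_bound by simp
  next
    case 18 then show ?case using lipschitz_cont[OF \<xi>_lip] by simp
  next
    case 19 then show ?case using U(2) by simp
  next
    case 20 then show ?case using U(3) by simp
  next
    case 21 then show ?case using U_int by simp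
  next
    case 22 then show ?case using Xi(2) by simp
  next
    case 23 then show ?case using Xi(3) by simp
  next
    case 24 then show ?case using Xi_bound by simp
  qed
  interpret st: setting i2 S SF SmF um U Xi \<sigma> K P \<xi> by (rule loc)
  define D where "D = {t. 0 \<le> t \<and> ereal t < T}"
  have goodD: "st.good f0 t" if t: "t \<in> D" for t
  proof -
    have t0: "0 \<le> t" and tT: "ereal t < T" using t by (auto simp: D_def)
    have eU: "ereal (U t) \<le> ext_val U T" and eX: "ereal (Xi t) \<le> ext_val Xi T"
    proof -
      have "ereal (U t) \<le> ext_val U T \<and> ereal (Xi t) \<le> ext_val Xi T"
      proof (cases T)
        case (real r)
        then have "t \<le> r" using tT by simp
        then have "U t \<le> U r" "Xi t \<le> Xi r" using t0 by (auto intro: mono_onD[OF U(2)] mono_onD[OF Xi(2)])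
        then show ?thesis using real by (simp add: ext_val_def)
      next
        case PInf
        then show ?thesis using t0 by (auto simp: ext_val_def intro: SUP_upper)
      next
        case MInf then show ?thesis using T by simp
      qed
      then show "ereal (U t) \<le> ext_val U T" "ereal (Xi t) \<le> ext_val Xi T" by auto
    qed
    have U0: "0 \<le> U t" and X0: "0 \<le> Xi t" using U Xi t0 by auto
    have A: "ereal (norm f0) + ereal (Xi t) * ereal (U t) \<le> ereal (norm f0) + ext_val Xi T * ext_val U T"
      by (intro add_left_mono ereal_mult_mono' eU eX) (use U0 X0 in auto)
    have B: "ereal (4 * K) * ereal (U t) \<le> ereal (4 * K) * ext_val U T"
      by (intro ereal_mult_left_mono eU) (use K in auto)
    have "ereal (4 * K) * ereal (U t) * (ereal (norm f0) + ereal (Xi t) * ereal (U t))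
        \<le> ereal (4 * K) * ext_val U T * (ereal (norm f0) + ext_val Xi T * ext_val U T)"
      by (rule ereal_mult_mono'[OF _ _ B A]) (use K U0 X0 in auto)
    also have "\<dots> \<le> 1" by (rule small)
    finally have "4 * K * U t * (norm f0 + Xi t * U t) \<le> 1" by simp
    then show ?thesis using t0 by (simp add: st.good_def st.FF_def)
  qed
  have cont: "continuous_on D (st.philim f0)"
    unfolding continuous_on_eq_continuous_within
  proof
    fix t assume t: "t \<in> D"
    then have "ereal t < T" by (simp add: D_def)
    then obtain b where b: "ereal t < ereal b" "ereal b < T" using ereal_dense2[of "ereal t" T] by auto
    have bD: "b \<in> D" using b t by (auto simp: D_def)
    have "continuous_on {0..b} (st.philim f0)" by (rule st.philim_props(1)[OF goodD[OF bD]])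
    then have c: "continuous (at t within {0..b}) (st.philim f0)"
      using t b unfolding continuous_on_eq_continuous_within by (auto simp: D_def)
    have "at t within D = at t within {0..b}"
    proof (rule at_within_nhd[of _ "{..<b}"])
      show "D \<inter> {..<b} - {t} = {0..b} \<inter> {..<b} - {t}"
        using b by (auto simp: D_def) (metis ereal_less_eq(3) less_imp_le order.strict_trans1)
    qed (use b in auto)
    then show "continuous (at t within D) (st.philim f0)" using c by simp
  qed
  show ?thesis
  proof (intro exI[of _ "st.philim f0"] conjI allI impI)
    show "continuous_on {t. 0 \<le> t \<and> ereal t < T} (st.philim f0)" using cont by (simp add: D_def)
    fix t assume t: "0 \<le> t \<and> ereal t < T"
    then have tD: "t \<in> D" by (simp add: D_def)
    show "((\<lambda>s. S (t - s) (P (st.philim f0 s) (st.philim f0 s) + \<xi> s)) has_integral (i2 (st.philim f0 t) - S t (i2 f0))) {0..t}"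
      by (rule st.philim_props(3)[OF goodD[OF tD]])
    have "norm (st.philim f0 t) \<le> st.MM f0 t"
      by (rule st.philim_props(2)[OF goodD[OF tD]]) (use t in auto)
    then show "norm (st.philim f0 t) \<le> (norm f0 + Xi t * U t) * chiX (4 * K * U t * (norm f0 + Xi t * U t))"
      by (simp add: st.MM_def st.FF_def)
  qed
qed


end
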